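(* Let $N\ge 2$ units $i=1,\dots,N$ be observed at times $t=-L,\dots,0,1$ with binary treatment $A_i$ applied at $t=1$, and suppose potential outcomes satisfy $$Y_{it}(0)-Y_{i,t-1}(0)=\delta_t+\epsilon_{it,0},\qquad Y_{it}(1)-Y_{it}(0)=\mathbb{I}(t=1)(\psi+\epsilon_{it,1}),$$ so that the unit effect is $\psi_i=Y_{i1}(1)-Y_{i1}(0)=\psi+\epsilon_{i1,1}$. Assume $Y_{it}=\mathbb{I}(t=1)A_iY_{it}(1)+(1-\mathbb{I}(t=1)A_i)Y_{it}(0)$, that $1\le\sum_iA_i\le N-1$, and that $|\epsilon_{it,a}|\le\zeta$ for all $i,t$ and $a\in\{0,1\}$. Define $\hat\psi_i^{DiD}=Y_{i1}-\hat Y_{i1}(0)$ if $A_i=1$, where $\hat Y_{i1}(0)=Y_{i0}+[\sum_j(1-A_j)]^{-1}\sum_j(1-A_j)(Y_{j1}-Y_{j0})$, and $\hat\psi_i^{DiD}=\hat Y_{i1}(1)-Y_{i1}$ if $A_i=0$, where $\hat Y_{i1}(1)=Y_{i0}+[\sum_jA_j]^{-1}\sum_jA_j(Y_{j1}-Y_{j0})$. Let $\tilde\tau_i=\{\tau\ge 0:\psi_i\in[\hat\psi_i^{DiD}-\tau,\hat\psi_i^{DiD}+\tau]\}$. Then for every treated unit $i$ ($A_i=1$), every $q_0\ge 2\zeta$ lies in $\tilde\tau_i$; and for every untreated unit $i$ ($A_i=0$), every $q_1\ge 4\zeta$ lies in $\tilde\tau_i$. *)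

theory Defs
  imports Complex_Main
begin

text \<open>Units are indexed by i in {1..N} (nat), times t by int.
  A i :: bool is the treatment indicator (True = treated).
  Potential outcomes: Y0 i t = Y_{it}(0), Y1 i t = Y_{it}(1).\<close>

definition ind :: "bool \<Rightarrow> real" where
  "ind b = (if b then 1 else 0)"

definition Yobs :: "(nat \<Rightarrow> bool) \<Rightarrow> (nat \<Rightarrow> int \<Rightarrow> real) \<Rightarrow> (nat \<Rightarrow> int \<Rightarrow> real) \<Rightarrow> nat \<Rightarrow> int \<Rightarrow> real" where
  "Yobs A Y0 Y1 i t = ind (t = 1) * ind (A i) * Y1 i t + (1 - ind (t = 1) * ind (A i)) * Y0 i t"

definition hatY0 :: "nat \<Rightarrow> (nat \<Rightarrow> bool) \<Rightarrow> (nat \<Rightarrow> int \<Rightarrow> real) \<Rightarrow> nat \<Rightarrow> real" where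
  "hatY0 N A Y i = Y i 0 + inverse (\<Sum>j\<in>{1..N}. 1 - ind (A j)) *
      (\<Sum>j\<in>{1..N}. (1 - ind (A j)) * (Y j 1 - Y j 0))"

definition hatY1 :: "nat \<Rightarrow> (nat \<Rightarrow> bool) \<Rightarrow> (nat \<Rightarrow> int \<Rightarrow> real) \<Rightarrow> nat \<Rightarrow> real" where
  "hatY1 N A Y i = Y i 0 + inverse (\<Sum>j\<in>{1..N}. ind (A j)) *
      (\<Sum>j\<in>{1..N}. ind (A j) * (Y j 1 - Y j 0))"

definition psi_hat_DiD :: "nat \<Rightarrow> (nat \<Rightarrow> bool) \<Rightarrow> (nat \<Rightarrow> int \<Rightarrow> real) \<Rightarrow> nat \<Rightarrow> real" where
  "psi_hat_DiD N A Y i = (if A i then Y i 1 - hatY0 N A Y i else hatY1 N A Y i - Y i 1)"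

definition tau_tilde :: "real \<Rightarrow> real \<Rightarrow> real set" where
  "tau_tilde psi_i psihat = {\<tau>. \<tau> \<ge> 0 \<and> psi_i \<in> {psihat - \<tau> .. psihat + \<tau>}}"

end

theory Submission
  imports Defs
begin

lemma avg_bound:
  fixes w x :: "nat \<Rightarrow> real"
  assumes "finite I" "\<And>j. j \<in> I \<Longrightarrow> w j \<ge> 0" "\<And>j. j \<in> I \<Longrightarrow> \<bar>x j\<bar> \<le> c"
    "sum w I > 0"
  shows "\<bar>inverse (sum w I) * (\<Sum>j\<in>I. w j * x j)\<bar> \<le> c"
proof -
  have "\<bar>\<Sum>j\<in>I. w j * x j\<bar> \<le> (\<Sum>j\<in>I. \<bar>w j * x j\<bar>)" by (rule sum_abs)
  also have "\<dots> \<le> (\<Sum>j\<in>I. w j * c)"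
    by (rule sum_mono) (simp add: abs_mult assms(2) assms(3) mult_left_mono)
  also have "\<dots> = c * sum w I" by (simp add: sum_distrib_left mult.commute)
  finally have "\<bar>\<Sum>j\<in>I. w j * x j\<bar> \<le> c * sum w I" .
  then show ?thesis using assms(4)
    by (simp add: abs_mult field_simps)
qed

theorem proposition5:
  fixes N L :: nat
    and A :: "nat \<Rightarrow> bool"
    and Y0 Y1 :: "nat \<Rightarrow> int \<Rightarrow> real"
    and \<delta> :: "int \<Rightarrow> real"
    and \<psi> \<zeta> :: real
    and eps0 eps1 :: "nat \<Rightarrow> int \<Rightarrow> real"
  assumes N2: "N \<ge> 2"
    and model0: "\<And>i t. i \<in> {1..N} \<Longrightarrow> t \<in> {- int L + 1 .. 1} \<Longrightarrow>
                   Y0 i t - Y0 i (t - 1) = \<delta> t + eps0 i t"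
    and model1: "\<And>i t. i \<in> {1..N} \<Longrightarrow> t \<in> {- int L .. 1} \<Longrightarrow>
                   Y1 i t - Y0 i t = ind (t = 1) * (\<psi> + eps1 i t)"
    and treat_pos: "1 \<le> (\<Sum>i\<in>{1..N}. ind (A i))"
    and treat_lt: "(\<Sum>i\<in>{1..N}. ind (A i)) \<le> real N - 1"
    and bnd0: "\<And>i t. i \<in> {1..N} \<Longrightarrow> t \<in> {- int L .. 1} \<Longrightarrow> \<bar>eps0 i t\<bar> \<le> \<zeta>"
    and bnd1: "\<And>i t. i \<in> {1..N} \<Longrightarrow> t \<in> {- int L .. 1} \<Longrightarrow> \<bar>eps1 i t\<bar> \<le> \<zeta>"
  shows "(\<forall>i\<in>{1..N}. A i \<longrightarrow> (\<forall>q0. q0 \<ge> 2 * \<zeta> \<longrightarrow>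
            q0 \<in> tau_tilde (Y1 i 1 - Y0 i 1) (psi_hat_DiD N A (Yobs A Y0 Y1) i)))
       \<and> (\<forall>i\<in>{1..N}. \<not> A i \<longrightarrow> (\<forall>q1. q1 \<ge> 4 * \<zeta> \<longrightarrow>
            q1 \<in> tau_tilde (Y1 i 1 - Y0 i 1) (psi_hat_DiD N A (Yobs A Y0 Y1) i)))"
proof -
  let ?Y = "Yobs A Y0 Y1"
  have t1: "(1::int) \<in> {- int L + 1 .. 1}" "(1::int) \<in> {- int L .. 1}" by auto
  have e0: "\<And>j. j \<in> {1..N} \<Longrightarrow> Y0 j 1 - Y0 j 0 = \<delta> 1 + eps0 j 1"
    using model0[OF _ t1(1)] by simp
  have e1: "\<And>j. j \<in> {1..N} \<Longrightarrow> Y1 j 1 - Y0 j 1 = \<psi> + eps1 j 1"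
    using model1[OF _ t1(2)] by (simp add: ind_def)
  have b0: "\<And>j. j \<in> {1..N} \<Longrightarrow> \<bar>eps0 j 1\<bar> \<le> \<zeta>" using bnd0 t1 by auto
  have b1: "\<And>j. j \<in> {1..N} \<Longrightarrow> \<bar>eps1 j 1\<bar> \<le> \<zeta>" using bnd1 t1 by auto
  have Yo1: "\<And>j. ?Y j 1 = (if A j then Y1 j 1 else Y0 j 1)" by (simp add: Yobs_def ind_def)
  have Yo0: "\<And>j. ?Y j 0 = Y0 j 0" by (simp add: Yobs_def ind_def)
  define S0 where "S0 = (\<Sum>j\<in>{1..N}. 1 - ind (A j))"
  define S1 where "S1 = (\<Sum>j\<in>{1..N}. ind (A j))"
  have S0pos: "S0 > 0"
  proof -
    have "S0 = real N - S1" unfolding S0_def S1_def by (simp add: sum_subtractf)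
    then show ?thesis using treat_lt unfolding S1_def by linarith
  qed
  have S1pos: "S1 > 0" using treat_pos unfolding S1_def by linarith
  define a0 where "a0 = inverse S0 * (\<Sum>j\<in>{1..N}. (1 - ind (A j)) * eps0 j 1)"
  define a1 where "a1 = inverse S1 * (\<Sum>j\<in>{1..N}. ind (A j) * (eps0 j 1 + eps1 j 1))"
  have a0b: "\<bar>a0\<bar> \<le> \<zeta>" unfolding a0_def S0_def
    by (rule avg_bound) (use b0 S0pos S0_def in \<open>auto simp: ind_def\<close>)
  have a1b: "\<bar>a1\<bar> \<le> 2 * \<zeta>" unfolding a1_def S1_def
  proof (rule avg_bound)
    fix j assume "j \<in> {1..N}"
    then show "\<bar>eps0 j 1 + eps1 j 1\<bar> \<le> 2 * \<zeta>" using b0 b1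
      by (smt (verit, best))
  qed (use S1pos S1_def in \<open>auto simp: ind_def\<close>)
  have h0: "hatY0 N A ?Y i = Y0 i 0 + \<delta> 1 + a0" for i
  proof -
    have "(\<Sum>j\<in>{1..N}. (1 - ind (A j)) * (?Y j 1 - ?Y j 0))
        = (\<Sum>j\<in>{1..N}. (1 - ind (A j)) * \<delta> 1 + (1 - ind (A j)) * eps0 j 1)"
    proof (rule sum.cong)
      fix j assume j: "j \<in> {1..N}"
      show "(1 - ind (A j)) * (?Y j 1 - ?Y j 0) = (1 - ind (A j)) * \<delta> 1 + (1 - ind (A j)) * eps0 j 1"
        using e0[OF j] by (auto simp: Yo1 Yo0 ind_def algebra_simps)
    qed simp
    also have "\<dots> = S0 * \<delta> 1 + (\<Sum>j\<in>{1..N}. (1 - ind (A j)) * eps0 j 1)"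
      by (simp add: sum.distrib S0_def sum_distrib_right)
    finally show ?thesis using S0pos unfolding hatY0_def Yo0 a0_def S0_def[symmetric]
      by (simp add: field_simps)
  qed
  have h1: "hatY1 N A ?Y i = Y0 i 0 + \<delta> 1 + \<psi> + a1" for i
  proof -
    have "(\<Sum>j\<in>{1..N}. ind (A j) * (?Y j 1 - ?Y j 0))
        = (\<Sum>j\<in>{1..N}. ind (A j) * (\<delta> 1 + \<psi>) + ind (A j) * (eps0 j 1 + eps1 j 1))"
    proof (rule sum.cong)
      fix j assume j: "j \<in> {1..N}"
      show "ind (A j) * (?Y j 1 - ?Y j 0) = ind (A j) * (\<delta> 1 + \<psi>) + ind (A j) * (eps0 j 1 + eps1 j 1)"
        using e0[OF j] e1[OF j] by (auto simp: Yo1 Yo0 ind_def algebra_simps)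
    qed simp
    also have "\<dots> = S1 * (\<delta> 1 + \<psi>) + (\<Sum>j\<in>{1..N}. ind (A j) * (eps0 j 1 + eps1 j 1))"
      by (simp add: sum.distrib S1_def sum_distrib_right)
    finally show ?thesis using S1pos unfolding hatY1_def Yo0 a1_def S1_def[symmetric]
      by (simp add: field_simps)
  qed
  show ?thesis
  proof (intro conjI ballI impI allI)
    fix i q0 assume i: "i \<in> {1..N}" and Ai: "A i" and q: "q0 \<ge> 2 * \<zeta>"
    have "psi_hat_DiD N A ?Y i = Y1 i 1 - (Y0 i 0 + \<delta> 1 + a0)"
      using Ai by (simp add: psi_hat_DiD_def h0 Yo1)
    then show "q0 \<in> tau_tilde (Y1 i 1 - Y0 i 1) (psi_hat_DiD N A ?Y i)"
      using e0[OF i] b0[OF i] a0b q unfolding tau_tilde_def by auto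
  next
    fix i q1 assume i: "i \<in> {1..N}" and Ai: "\<not> A i" and q: "q1 \<ge> 4 * \<zeta>"
    have "psi_hat_DiD N A ?Y i = (Y0 i 0 + \<delta> 1 + \<psi> + a1) - Y0 i 1"
      using Ai by (simp add: psi_hat_DiD_def h1 Yo1)
    then show "q1 \<in> tau_tilde (Y1 i 1 - Y0 i 1) (psi_hat_DiD N A ?Y i)"
      using e0[OF i] e1[OF i] b0[OF i] b1[OF i] a1b q unfolding tau_tilde_def by auto
  qed
qed

end
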